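(* Let $F,G\colon\mathbb A^{op}\times\mathbb A\to\mathbb B$ and $H,K\colon\mathbb B^{op}\times\mathbb B\to\mathbb C$ be functors and $\phi\colon F\to G$, $\psi\colon H\to K$ dinatural transformations of type $2\to1\leftarrow2$. Then the horizontal composite $\phi\ast\psi$ is a dinatural transformation $H(G^{op},F)\to K(F^{op},G)$ of type $4\to1\leftarrow4$, where $H(G^{op},F),K(F^{op},G)\colon\mathbb A^{[+,-,-,+]}\to\mathbb C$ are given on objects by $(A,B,C,D)\mapsto H(G(A,B),F(C,D))$ and $(A,B,C,D)\mapsto K(F(A,B),G(C,D))$ and similarly on morphisms.
   Context: A dinatural transformation $\phi\colon F\to G$ of type $2\to1\leftarrow2$ between functors $F,G\colon\mathbb A^{op}\times\mathbb A\to\mathbb B$ is a family $\phi_A\colon F(A,A)\to G(A,A)$ such that for every $f\colon A\to A'$, $G(1_A,f)\circ\phi_A\circ F(f,1_A)=G(f,1_{A'})\circ\phi_{A'}\circ F(1_{A'},f)$. A transformation of type $4\to1\leftarrow4$ between functors $\mathbb A^{[+,-,-,+]}=\mathbb A\times\mathbb A^{op}\times\mathbb A^{op}\times\mathbb A\to\mathbb C$ is a family indexed by one object $A$ with components between the functors evaluated at $(A,A,A,A)$; it is dinatural if for every $f\colon A\to A'$ the hexagon obtained by applying the domain functor to $f$ in its covariant arguments ($1,4$) or contravariant arguments ($2,3$) and the codomain functor dually commutes, exactly as in the two-argument case. Horizontal composite: $\phi\ast\psi$ is the family with components $(\phi\ast\psi)_A\colon H(G(A,A),F(A,A))\to K(F(A,A),G(A,A))$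 given by $(\phi\ast\psi)_A=K(1_{F(A,A)},\phi_A)\circ\psi_{F(A,A)}\circ H(\phi_A,1_{F(A,A)})$, which equals $K(\phi_A,1_{G(A,A)})\circ\psi_{G(A,A)}\circ H(1_{G(A,A)},\phi_A)$ by dinaturality of $\psi$. *)

theory Defs
  imports Main
begin

text \<open>Categories given explicitly by objects, arrows, domain, codomain, identities
  and composition (Comp C g f is g after f).\<close>

record ('o, 'm) cat =
  Ob :: "'o set"
  Ar :: "'m set"
  Dom :: "'m \<Rightarrow> 'o"
  Cod :: "'m \<Rightarrow> 'o"
  Id :: "'o \<Rightarrow> 'm"
  Comp :: "'m \<Rightarrow> 'm \<Rightarrow> 'm"

definition hom :: "('o, 'm) cat \<Rightarrow> 'o \<Rightarrow> 'o \<Rightarrow> 'm set" where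
  "hom C a b = {f \<in> Ar C. Dom C f = a \<and> Cod C f = b}"

definition category :: "('o, 'm) cat \<Rightarrow> bool" where
  "category C \<longleftrightarrow>
     (\<forall>f\<in>Ar C. Dom C f \<in> Ob C \<and> Cod C f \<in> Ob C) \<and>
     (\<forall>a\<in>Ob C. Id C a \<in> hom C a a) \<and>
     (\<forall>f\<in>Ar C. \<forall>g\<in>Ar C. Cod C f = Dom C g \<longrightarrow> Comp C g f \<in> hom C (Dom C f) (Cod C g)) \<and>
     (\<forall>f\<in>Ar C. Comp C (Id C (Cod C f)) f = f \<and> Comp C f (Id C (Dom C f)) = f) \<and>
     (\<forall>f\<in>Ar C. \<forall>g\<in>Ar C. \<forall>h\<in>Ar C. Cod C f = Dom C g \<longrightarrow> Cod C g = Dom C h \<longrightarrow>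
        Comp C h (Comp C g f) = Comp C (Comp C h g) f)"

definition opcat :: "('o, 'm) cat \<Rightarrow> ('o, 'm) cat" where
  "opcat C = \<lparr>Ob = Ob C, Ar = Ar C, Dom = Cod C, Cod = Dom C, Id = Id C,
              Comp = (\<lambda>g f. Comp C f g)\<rparr>"

definition prodcat :: "('o, 'm) cat \<Rightarrow> ('p, 'n) cat \<Rightarrow> ('o \<times> 'p, 'm \<times> 'n) cat" where
  "prodcat C D = \<lparr>Ob = Ob C \<times> Ob D, Ar = Ar C \<times> Ar D,
     Dom = (\<lambda>(f, g). (Dom C f, Dom D g)), Cod = (\<lambda>(f, g). (Cod C f, Cod D g)),
     Id = (\<lambda>(a, b). (Id C a, Id D b)),
     Comp = (\<lambda>(f', g') (f, g). (Comp C f' f, Comp D g' g))\<rparr>"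

definition "functor" :: "('o, 'm) cat \<Rightarrow> ('p, 'n) cat \<Rightarrow> ('o \<Rightarrow> 'p) \<Rightarrow> ('m \<Rightarrow> 'n) \<Rightarrow> bool" where
  "functor C D Fo Fa \<longleftrightarrow>
     (\<forall>a\<in>Ob C. Fo a \<in> Ob D) \<and>
     (\<forall>f\<in>Ar C. Fa f \<in> hom D (Fo (Dom C f)) (Fo (Cod C f))) \<and>
     (\<forall>a\<in>Ob C. Fa (Id C a) = Id D (Fo a)) \<and>
     (\<forall>f\<in>Ar C. \<forall>g\<in>Ar C. Cod C f = Dom C g \<longrightarrow> Fa (Comp C g f) = Comp D (Fa g) (Fa f))"

text \<open>The category A^op x A and A^[+,-,-,+] = A x A^op x A^op x A.\<close>
definition mixcat2 :: "('o, 'm) cat \<Rightarrow> ('o \<times> 'o, 'm \<times> 'm) cat" where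
  "mixcat2 A = prodcat (opcat A) A"

definition mixcat4 :: "('o, 'm) cat \<Rightarrow> ('o \<times> 'o \<times> 'o \<times> 'o, 'm \<times> 'm \<times> 'm \<times> 'm) cat" where
  "mixcat4 A = prodcat A (prodcat (opcat A) (prodcat (opcat A) A))"

definition dinat2 ::
  "('o, 'm) cat \<Rightarrow> ('p, 'n) cat \<Rightarrow> ('o \<times> 'o \<Rightarrow> 'p) \<Rightarrow> ('m \<times> 'm \<Rightarrow> 'n)
   \<Rightarrow> ('o \<times> 'o \<Rightarrow> 'p) \<Rightarrow> ('m \<times> 'm \<Rightarrow> 'n) \<Rightarrow> ('o \<Rightarrow> 'n) \<Rightarrow> bool" where
  "dinat2 A B Fo Fa Go Ga \<phi> \<longleftrightarrow>
     (\<forall>a\<in>Ob A. \<phi> a \<in> hom B (Fo (a, a)) (Go (a, a))) \<and>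
     (\<forall>f\<in>Ar A. let a = Dom A f; a' = Cod A f in
        Comp B (Ga (Id A a, f)) (Comp B (\<phi> a) (Fa (f, Id A a))) =
        Comp B (Ga (f, Id A a')) (Comp B (\<phi> a') (Fa (Id A a', f))))"

definition dinat4 ::
  "('o, 'm) cat \<Rightarrow> ('p, 'n) cat
   \<Rightarrow> ('o \<times> 'o \<times> 'o \<times> 'o \<Rightarrow> 'p) \<Rightarrow> ('m \<times> 'm \<times> 'm \<times> 'm \<Rightarrow> 'n)
   \<Rightarrow> ('o \<times> 'o \<times> 'o \<times> 'o \<Rightarrow> 'p) \<Rightarrow> ('m \<times> 'm \<times> 'm \<times> 'm \<Rightarrow> 'n) \<Rightarrow> ('o \<Rightarrow> 'n) \<Rightarrow> bool" where
  "dinat4 A C To Ta So Sa \<theta> \<longleftrightarrow>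
     (\<forall>a\<in>Ob A. \<theta> a \<in> hom C (To (a, a, a, a)) (So (a, a, a, a))) \<and>
     (\<forall>f\<in>Ar A. let a = Dom A f; a' = Cod A f in
        Comp C (Sa (f, Id A a, Id A a, f)) (Comp C (\<theta> a) (Ta (Id A a, f, f, Id A a))) =
        Comp C (Sa (Id A a', f, f, Id A a')) (Comp C (\<theta> a') (Ta (f, Id A a', Id A a', f))))"

definition mix_ob :: "('b \<times> 'b \<Rightarrow> 'c) \<Rightarrow> ('a \<times> 'a \<Rightarrow> 'b) \<Rightarrow> ('a \<times> 'a \<Rightarrow> 'b)
   \<Rightarrow> 'a \<times> 'a \<times> 'a \<times> 'a \<Rightarrow> 'c" where
  "mix_ob Ho Go Fo = (\<lambda>(a, b, c, d). Ho (Go (a, b), Fo (c, d)))"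

definition mix_ar :: "('g \<times> 'g \<Rightarrow> 'h) \<Rightarrow> ('f \<times> 'f \<Rightarrow> 'g) \<Rightarrow> ('f \<times> 'f \<Rightarrow> 'g)
   \<Rightarrow> 'f \<times> 'f \<times> 'f \<times> 'f \<Rightarrow> 'h" where
  "mix_ar Ha Ga Fa = (\<lambda>(f1, f2, f3, f4). Ha (Ga (f1, f2), Fa (f3, f4)))"

definition hcomp :: "('p, 'n) cat \<Rightarrow> ('q, 'k) cat \<Rightarrow> ('o \<times> 'o \<Rightarrow> 'p)
   \<Rightarrow> ('n \<times> 'n \<Rightarrow> 'k) \<Rightarrow> ('n \<times> 'n \<Rightarrow> 'k) \<Rightarrow> ('o \<Rightarrow> 'n) \<Rightarrow> ('p \<Rightarrow> 'k) \<Rightarrow> 'o \<Rightarrow> 'k" where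
  "hcomp B C Fo Ha Ka \<phi> \<psi> = (\<lambda>a.
     Comp C (Ka (Id B (Fo (a, a)), \<phi> a))
       (Comp C (\<psi> (Fo (a, a))) (Ha (\<phi> a, Id B (Fo (a, a))))))"

end

theory Submission
  imports Defs
begin

lemma hom_iff: "f \<in> hom C a b \<longleftrightarrow> f \<in> Ar C \<and> Dom C f = a \<and> Cod C f = b"
  by (simp add: hom_def)

lemma cat_id: "category C \<Longrightarrow> a \<in> Ob C \<Longrightarrow> Id C a \<in> hom C a a"
  by (simp add: category_def)

lemma cat_comp: "category C \<Longrightarrow> f \<in> hom C a b \<Longrightarrow> g \<in> hom C b c \<Longrightarrow> Comp C g f \<in> hom C a c"
  unfolding category_def hom_def by auto

lemma cat_idl: "category C \<Longrightarrow> f \<in> hom C a b \<Longrightarrow> Comp C (Id C b) f = f"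
  unfolding category_def hom_def by auto

lemma cat_idr: "category C \<Longrightarrow> f \<in> hom C a b \<Longrightarrow> Comp C f (Id C a) = f"
  unfolding category_def hom_def by auto

lemma cat_obs: "category C \<Longrightarrow> f \<in> hom C a b \<Longrightarrow> a \<in> Ob C \<and> b \<in> Ob C"
  unfolding category_def hom_def by auto

lemma cat_assoc: "category C \<Longrightarrow> f \<in> Ar C \<Longrightarrow> g \<in> Ar C \<Longrightarrow> h \<in> Ar C \<Longrightarrow>
  Cod C f = Dom C g \<Longrightarrow> Cod C g = Dom C h \<Longrightarrow> Comp C h (Comp C g f) = Comp C (Comp C h g) f"
  unfolding category_def by auto

lemma cat_comp_ar: "category C \<Longrightarrow> f \<in> Ar C \<Longrightarrow> g \<in> Ar C \<Longrightarrow> Cod C f = Dom C g \<Longrightarrow> Comp C g f \<in> Ar C"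
  unfolding category_def hom_def by auto
lemma cat_comp_dom: "category C \<Longrightarrow> f \<in> Ar C \<Longrightarrow> g \<in> Ar C \<Longrightarrow> Cod C f = Dom C g \<Longrightarrow> Dom C (Comp C g f) = Dom C f"
  unfolding category_def hom_def by auto
lemma cat_comp_cod: "category C \<Longrightarrow> f \<in> Ar C \<Longrightarrow> g \<in> Ar C \<Longrightarrow> Cod C f = Dom C g \<Longrightarrow> Cod C (Comp C g f) = Cod C g"
  unfolding category_def hom_def by auto

lemma mixcat2_simps:
  "Ob (mixcat2 A) = Ob A \<times> Ob A" "Ar (mixcat2 A) = Ar A \<times> Ar A"
  "Dom (mixcat2 A) (f, g) = (Cod A f, Dom A g)" "Cod (mixcat2 A) (f, g) = (Dom A f, Cod A g)"
  "Id (mixcat2 A) (a, b) = (Id A a, Id A b)"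
  "Comp (mixcat2 A) (f', g') (f, g) = (Comp A f f', Comp A g' g)"
  by (simp_all add: mixcat2_def prodcat_def opcat_def)

lemma mixcat4_simps:
  "Ob (mixcat4 A) = Ob A \<times> Ob A \<times> Ob A \<times> Ob A" "Ar (mixcat4 A) = Ar A \<times> Ar A \<times> Ar A \<times> Ar A"
  "Dom (mixcat4 A) (f1, f2, f3, f4) = (Dom A f1, Cod A f2, Cod A f3, Dom A f4)"
  "Cod (mixcat4 A) (f1, f2, f3, f4) = (Cod A f1, Dom A f2, Dom A f3, Cod A f4)"
  "Id (mixcat4 A) (a, b, c, d) = (Id A a, Id A b, Id A c, Id A d)"
  "Comp (mixcat4 A) (g1, g2, g3, g4) (f1, f2, f3, f4) = (Comp A g1 f1, Comp A f2 g2, Comp A f3 g3, Comp A g4 f4)"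
  by (simp_all add: mixcat4_def prodcat_def opcat_def)

lemma fun2_ob: "functor (mixcat2 A) B Fo Fa \<Longrightarrow> a \<in> Ob A \<Longrightarrow> b \<in> Ob A \<Longrightarrow> Fo (a, b) \<in> Ob B"
  unfolding functor_def mixcat2_simps by auto

lemma fun2_hom: "functor (mixcat2 A) B Fo Fa \<Longrightarrow> f \<in> hom A a a' \<Longrightarrow> g \<in> hom A b b' \<Longrightarrow>
   Fa (f, g) \<in> hom B (Fo (a', b)) (Fo (a, b'))"
  unfolding functor_def by (auto simp: mixcat2_simps hom_def)

lemma fun2_id: "functor (mixcat2 A) B Fo Fa \<Longrightarrow> a \<in> Ob A \<Longrightarrow> b \<in> Ob A \<Longrightarrow>
   Fa (Id A a, Id A b) = Id B (Fo (a, b))"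
  unfolding functor_def by (auto simp: mixcat2_simps)

lemma fun2_comp: "functor (mixcat2 A) B Fo Fa \<Longrightarrow> g1 \<in> hom A p q \<Longrightarrow> f1 \<in> hom A q r \<Longrightarrow>
   f2 \<in> hom A s t \<Longrightarrow> g2 \<in> hom A t w \<Longrightarrow>
   Fa (Comp A f1 g1, Comp A g2 f2) = Comp B (Fa (g1, g2)) (Fa (f1, f2))"
proof -
  assume F: "functor (mixcat2 A) B Fo Fa" and h: "g1 \<in> hom A p q" "f1 \<in> hom A q r"
     "f2 \<in> hom A s t" "g2 \<in> hom A t w"
  have "Fa (Comp (mixcat2 A) (g1, g2) (f1, f2)) = Comp B (Fa (g1, g2)) (Fa (f1, f2))"
    using F h unfolding functor_def by (auto simp: mixcat2_simps hom_def)
  then show ?thesis by (simp add: mixcat2_simps)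
qed

lemma fun4:
  assumes cA: "category A" and cB: "category B"
    and F: "functor (mixcat2 A) B Fo Fa" and G: "functor (mixcat2 A) B Go Ga"
    and H: "functor (mixcat2 B) C Ho Ha"
  shows "functor (mixcat4 A) C (mix_ob Ho Go Fo) (mix_ar Ha Ga Fa)"
  unfolding functor_def
proof (intro conjI ballI impI)
  fix x assume "x \<in> Ob (mixcat4 A)"
  then show "mix_ob Ho Go Fo x \<in> Ob C"
    by (auto simp: mixcat4_simps mix_ob_def intro!: fun2_ob[OF H] fun2_ob[OF G] fun2_ob[OF F])
next
  fix x assume "x \<in> Ob (mixcat4 A)"
  then obtain a b c d where x: "x = (a, b, c, d)" and o: "a \<in> Ob A" "b \<in> Ob A" "c \<in> Ob A" "d \<in> Ob A"
    by (auto simp: mixcat4_simps)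
  show "mix_ar Ha Ga Fa (Id (mixcat4 A) x) = Id C (mix_ob Ho Go Fo x)"
    using o by (simp add: x mixcat4_simps mix_ar_def mix_ob_def fun2_id[OF G] fun2_id[OF F]
        fun2_id[OF H] fun2_ob[OF G] fun2_ob[OF F])
next
  fix x assume "x \<in> Ar (mixcat4 A)"
  then obtain f1 f2 f3 f4 where x: "x = (f1, f2, f3, f4)" and o: "f1 \<in> Ar A" "f2 \<in> Ar A" "f3 \<in> Ar A" "f4 \<in> Ar A"
    by (auto simp: mixcat4_simps)
  have h: "f1 \<in> hom A (Dom A f1) (Cod A f1)" "f2 \<in> hom A (Dom A f2) (Cod A f2)"
    "f3 \<in> hom A (Dom A f3) (Cod A f3)" "f4 \<in> hom A (Dom A f4) (Cod A f4)"
    using o by (auto simp: hom_def)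
  have "Ha (Ga (f1, f2), Fa (f3, f4)) \<in> hom C (Ho (Go (Dom A f1, Cod A f2), Fo (Cod A f3, Dom A f4)))
        (Ho (Go (Cod A f1, Dom A f2), Fo (Dom A f3, Cod A f4)))"
    by (rule fun2_hom[OF H fun2_hom[OF G h(1) h(2)] fun2_hom[OF F h(3) h(4)]])
  then show "mix_ar Ha Ga Fa x \<in> hom C (mix_ob Ho Go Fo (Dom (mixcat4 A) x)) (mix_ob Ho Go Fo (Cod (mixcat4 A) x))"
    by (simp add: x mixcat4_simps mix_ar_def mix_ob_def)
next
  fix x y assume "x \<in> Ar (mixcat4 A)" "y \<in> Ar (mixcat4 A)" and xy: "Cod (mixcat4 A) x = Dom (mixcat4 A) y"
  then obtain f1 f2 f3 f4 g1 g2 g3 g4 where x: "x = (f1, f2, f3, f4)" and y: "y = (g1, g2, g3, g4)"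
    and o: "f1 \<in> Ar A" "f2 \<in> Ar A" "f3 \<in> Ar A" "f4 \<in> Ar A"
       "g1 \<in> Ar A" "g2 \<in> Ar A" "g3 \<in> Ar A" "g4 \<in> Ar A"
    by (auto simp: mixcat4_simps)
  have e: "Cod A f1 = Dom A g1" "Dom A f2 = Cod A g2" "Dom A f3 = Cod A g3" "Cod A f4 = Dom A g4"
    using xy by (auto simp: x y mixcat4_simps)
  have h: "f1 \<in> hom A (Dom A f1) (Cod A f1)" "f2 \<in> hom A (Cod A g2) (Cod A f2)"
    "f3 \<in> hom A (Cod A g3) (Cod A f3)" "f4 \<in> hom A (Dom A f4) (Dom A g4)"
    "g1 \<in> hom A (Cod A f1) (Cod A g1)" "g2 \<in> hom A (Dom A g2) (Cod A g2)"
    "g3 \<in> hom A (Dom A g3) (Cod A g3)" "g4 \<in> hom A (Dom A g4) (Cod A g4)"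
    using o e by (auto simp: hom_def)
  have 1: "Ga (Comp A g1 f1, Comp A f2 g2) = Comp B (Ga (f1, f2)) (Ga (g1, g2))"
    by (rule fun2_comp[OF G h(1) h(5) h(6) h(2)])
  have 2: "Fa (Comp A f3 g3, Comp A g4 f4) = Comp B (Fa (g3, g4)) (Fa (f3, f4))"
    by (rule fun2_comp[OF F h(7) h(3) h(4) h(8)])
  have 3: "Ha (Comp B (Ga (f1, f2)) (Ga (g1, g2)), Comp B (Fa (g3, g4)) (Fa (f3, f4)))
     = Comp C (Ha (Ga (g1, g2), Fa (g3, g4))) (Ha (Ga (f1, f2), Fa (f3, f4)))"
    by (rule fun2_comp[OF H fun2_hom[OF G h(5) h(6)] fun2_hom[OF G h(1) h(2)]
          fun2_hom[OF F h(3) h(4)] fun2_hom[OF F h(7) h(8)]])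
  show "mix_ar Ha Ga Fa (Comp (mixcat4 A) y x) = Comp C (mix_ar Ha Ga Fa y) (mix_ar Ha Ga Fa x)"
    by (simp add: x y mixcat4_simps mix_ar_def 1 2 3)
qed


lemma side:
  assumes cB: "category B" and cC: "category C"
    and H: "functor (mixcat2 B) C Ho Ha" and K: "functor (mixcat2 B) C Ko Ka"
    and psi: "dinat2 B C Ho Ha Ko Ka \<psi>"
    and u: "u \<in> hom B x y" and v: "v \<in> hom B g z" and p: "p \<in> hom B y g"
  shows "Comp C (Ka (u, v)) (Comp C (Comp C (Ka (Id B y, p)) (Comp C (\<psi> y) (Ha (p, Id B y)))) (Ha (v, u)))
       = Comp C (Ka (Id B x, Comp B v (Comp B p u))) (Comp C (\<psi> x) (Ha (Comp B v (Comp B p u), Id B x)))"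
proof -
  have ob: "x \<in> Ob B" "y \<in> Ob B" "g \<in> Ob B" "z \<in> Ob B"
    using cat_obs[OF cB u] cat_obs[OF cB v] by auto
  have ix: "Id B x \<in> hom B x x" and iy: "Id B y \<in> hom B y y" using cat_id[OF cB] ob by auto
  define w where "w = Comp B v p"
  have w: "w \<in> hom B y z" unfolding w_def by (rule cat_comp[OF cB p v])
  have wu: "Comp B w u \<in> hom B x z" by (rule cat_comp[OF cB u w])
  have psix: "\<psi> x \<in> hom C (Ho (x, x)) (Ko (x, x))" and psiy: "\<psi> y \<in> hom C (Ho (y, y)) (Ko (y, y))"
    using psi ob unfolding dinat2_def by auto
  have dn: "Comp C (Ka (Id B x, u)) (Comp C (\<psi> x) (Ha (u, Id B x))) =
            Comp C (Ka (u, Id B y)) (Comp C (\<psi> y) (Ha (Id B y, u)))"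
  proof -
    have "u \<in> Ar B" "Dom B u = x" "Cod B u = y" using u by (auto simp: hom_def)
    then show ?thesis using psi unfolding dinat2_def Let_def by metis
  qed
  have hs: "Ka (u, v) \<in> hom C (Ko (y, g)) (Ko (x, z))"
     "Ka (Id B y, p) \<in> hom C (Ko (y, y)) (Ko (y, g))"
     "Ha (p, Id B y) \<in> hom C (Ho (g, y)) (Ho (y, y))"
     "Ha (v, u) \<in> hom C (Ho (z, x)) (Ho (g, y))"
     "Ka (Id B x, w) \<in> hom C (Ko (x, y)) (Ko (x, z))"
     "Ka (u, Id B y) \<in> hom C (Ko (y, y)) (Ko (x, y))"
     "Ha (Id B y, u) \<in> hom C (Ho (y, x)) (Ho (y, y))"
     "Ha (w, Id B x) \<in> hom C (Ho (z, x)) (Ho (y, x))"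
     "Ka (Id B x, u) \<in> hom C (Ko (x, x)) (Ko (x, y))"
     "Ha (u, Id B x) \<in> hom C (Ho (y, x)) (Ho (x, x))"
     "\<psi> x \<in> hom C (Ho (x, x)) (Ko (x, x))" "\<psi> y \<in> hom C (Ho (y, y)) (Ko (y, y))"
    by (rule fun2_hom[OF K u v] fun2_hom[OF K iy p] fun2_hom[OF H p iy] fun2_hom[OF H v u]
        fun2_hom[OF K ix w] fun2_hom[OF K u iy] fun2_hom[OF H iy u] fun2_hom[OF H w ix]
        fun2_hom[OF K ix u] fun2_hom[OF H u ix] psix psiy)+
  have 1: "Comp C (Ka (u, v)) (Ka (Id B y, p)) = Ka (u, w)"
    using fun2_comp[OF K u iy p v] cat_idl[OF cB u] by (simp add: w_def)
  have 2: "Comp C (Ha (p, Id B y)) (Ha (v, u)) = Ha (w, u)"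
    using fun2_comp[OF H p v u iy] cat_idl[OF cB u] by (simp add: w_def)
  have 3: "Ka (u, w) = Comp C (Ka (Id B x, w)) (Ka (u, Id B y))"
    using fun2_comp[OF K ix u iy w] cat_idr[OF cB u] cat_idr[OF cB w] by simp
  have 4: "Ha (w, u) = Comp C (Ha (Id B y, u)) (Ha (w, Id B x))"
    using fun2_comp[OF H iy w ix u] cat_idr[OF cB u] cat_idr[OF cB w] by simp
  have 6: "Comp C (Ka (Id B x, w)) (Ka (Id B x, u)) = Ka (Id B x, Comp B w u)"
    using fun2_comp[OF K ix ix u w] cat_idl[OF cB ix] by simp
  have 7: "Comp C (Ha (u, Id B x)) (Ha (w, Id B x)) = Ha (Comp B w u, Id B x)"
    using fun2_comp[OF H u w ix ix] cat_idl[OF cB ix] by simp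
  have 8: "Comp B w u = Comp B v (Comp B p u)"
    using u v p unfolding w_def by (simp add: hom_def cat_assoc[OF cB])
  note simps = hom_iff cat_assoc[OF cC] cat_comp_ar[OF cC] cat_comp_dom[OF cC] cat_comp_cod[OF cC]
  have "Comp C (Ka (u, v)) (Comp C (Comp C (Ka (Id B y, p)) (Comp C (\<psi> y) (Ha (p, Id B y)))) (Ha (v, u)))
      = Comp C (Comp C (Ka (u, v)) (Ka (Id B y, p))) (Comp C (\<psi> y) (Comp C (Ha (p, Id B y)) (Ha (v, u))))"
    using hs by (simp add: simps)
  also have "\<dots> = Comp C (Comp C (Ka (Id B x, w)) (Ka (u, Id B y))) (Comp C (\<psi> y) (Comp C (Ha (Id B y, u)) (Ha (w, Id B x))))"
    unfolding 1 2 3 4 ..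
  also have "\<dots> = Comp C (Ka (Id B x, w)) (Comp C (Comp C (Ka (u, Id B y)) (Comp C (\<psi> y) (Ha (Id B y, u)))) (Ha (w, Id B x)))"
    using hs by (simp add: simps)
  also have "\<dots> = Comp C (Ka (Id B x, w)) (Comp C (Comp C (Ka (Id B x, u)) (Comp C (\<psi> x) (Ha (u, Id B x)))) (Ha (w, Id B x)))"
    unfolding dn ..
  also have "\<dots> = Comp C (Comp C (Ka (Id B x, w)) (Ka (Id B x, u))) (Comp C (\<psi> x) (Comp C (Ha (u, Id B x)) (Ha (w, Id B x))))"
    using hs by (simp add: simps)
  also have "\<dots> = Comp C (Ka (Id B x, Comp B v (Comp B p u))) (Comp C (\<psi> x) (Ha (Comp B v (Comp B p u), Id B x)))"
    unfolding 6 7 8 ..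
  finally show ?thesis .
qed


theorem mainTheorem8:
  fixes A :: "('a, 'f) cat" and B :: "('b, 'g) cat" and C :: "('c, 'h) cat"
    and Fo Go :: "'a \<times> 'a \<Rightarrow> 'b" and Fa Ga :: "'f \<times> 'f \<Rightarrow> 'g"
    and Ho Ko :: "'b \<times> 'b \<Rightarrow> 'c" and Ha Ka :: "'g \<times> 'g \<Rightarrow> 'h"
    and \<phi> :: "'a \<Rightarrow> 'g" and \<psi> :: "'b \<Rightarrow> 'h"
  assumes "category A" and "category B" and "category C"
    and "functor (mixcat2 A) B Fo Fa" and "functor (mixcat2 A) B Go Ga"
    and "functor (mixcat2 B) C Ho Ha" and "functor (mixcat2 B) C Ko Ka"
    and "dinat2 A B Fo Fa Go Ga \<phi>"
    and "dinat2 B C Ho Ha Ko Ka \<psi>"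
  shows "functor (mixcat4 A) C (mix_ob Ho Go Fo) (mix_ar Ha Ga Fa)
    \<and> functor (mixcat4 A) C (mix_ob Ko Fo Go) (mix_ar Ka Fa Ga)
    \<and> dinat4 A C (mix_ob Ho Go Fo) (mix_ar Ha Ga Fa) (mix_ob Ko Fo Go) (mix_ar Ka Fa Ga)
        (hcomp B C Fo Ha Ka \<phi> \<psi>)"
proof (intro conjI)
  note cA = assms(1) and cB = assms(2) and cC = assms(3) and F = assms(4) and G = assms(5)
    and H = assms(6) and K = assms(7) and phi = assms(8) and psi = assms(9)
  show "functor (mixcat4 A) C (mix_ob Ho Go Fo) (mix_ar Ha Ga Fa)"
    by (rule fun4[OF cA cB F G H])
  show "functor (mixcat4 A) C (mix_ob Ko Fo Go) (mix_ar Ka Fa Ga)"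
    by (rule fun4[OF cA cB G F K])
  show "dinat4 A C (mix_ob Ho Go Fo) (mix_ar Ha Ga Fa) (mix_ob Ko Fo Go) (mix_ar Ka Fa Ga)
        (hcomp B C Fo Ha Ka \<phi> \<psi>)"
    unfolding dinat4_def Let_def
  proof (intro conjI ballI)
    fix a assume a: "a \<in> Ob A"
    have ia: "Id A a \<in> hom A a a" using cat_id[OF cA a] .
    have y: "Fo (a, a) \<in> Ob B" using fun2_ob[OF F a a] .
    have iy: "Id B (Fo (a, a)) \<in> hom B (Fo (a, a)) (Fo (a, a))" using cat_id[OF cB y] .
    have p: "\<phi> a \<in> hom B (Fo (a, a)) (Go (a, a))" using phi a unfolding dinat2_def by auto
    have ps: "\<psi> (Fo (a, a)) \<in> hom C (Ho (Fo (a, a), Fo (a, a))) (Ko (Fo (a, a), Fo (a, a)))"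
      using psi y unfolding dinat2_def by auto
    show "hcomp B C Fo Ha Ka \<phi> \<psi> a \<in> hom C (mix_ob Ho Go Fo (a, a, a, a)) (mix_ob Ko Fo Go (a, a, a, a))"
      unfolding hcomp_def mix_ob_def
      by (auto intro!: cat_comp[OF cC] fun2_hom[OF K iy p] fun2_hom[OF H p iy] ps)
  next
    fix f assume f: "f \<in> Ar A"
    define a a' where "a = Dom A f" and "a' = Cod A f"
    have fh: "f \<in> hom A a a'" using f by (simp add: hom_def a_def a'_def)
    have ob: "a \<in> Ob A" "a' \<in> Ob A" using cat_obs[OF cA fh] by auto
    have ia: "Id A a \<in> hom A a a" and ia': "Id A a' \<in> hom A a' a'" using cat_id[OF cA] ob by auto
    have u: "Fa (f, Id A a) \<in> hom B (Fo (a', a)) (Fo (a, a))" using fun2_hom[OF F fh ia] .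
    have v: "Ga (Id A a, f) \<in> hom B (Go (a, a)) (Go (a, a'))" using fun2_hom[OF G ia fh] .
    have u': "Fa (Id A a', f) \<in> hom B (Fo (a', a)) (Fo (a', a'))" using fun2_hom[OF F ia' fh] .
    have v': "Ga (f, Id A a') \<in> hom B (Go (a', a')) (Go (a, a'))" using fun2_hom[OF G fh ia'] .
    have p: "\<phi> a \<in> hom B (Fo (a, a)) (Go (a, a))" "\<phi> a' \<in> hom B (Fo (a', a')) (Go (a', a'))"
      using phi ob unfolding dinat2_def by auto
    have dn: "Comp B (Ga (Id A a, f)) (Comp B (\<phi> a) (Fa (f, Id A a))) =
        Comp B (Ga (f, Id A a')) (Comp B (\<phi> a') (Fa (Id A a', f)))"
      using phi f unfolding dinat2_def Let_def a_def a'_def by auto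
    show "Comp C (mix_ar Ka Fa Ga (f, Id A (Dom A f), Id A (Dom A f), f))
          (Comp C (hcomp B C Fo Ha Ka \<phi> \<psi> (Dom A f))
            (mix_ar Ha Ga Fa (Id A (Dom A f), f, f, Id A (Dom A f)))) =
         Comp C (mix_ar Ka Fa Ga (Id A (Cod A f), f, f, Id A (Cod A f)))
          (Comp C (hcomp B C Fo Ha Ka \<phi> \<psi> (Cod A f))
            (mix_ar Ha Ga Fa (f, Id A (Cod A f), Id A (Cod A f), f)))"
      unfolding a_def[symmetric] a'_def[symmetric] mix_ar_def hcomp_def split
      unfolding side[OF cB cC H K psi u v p(1)] side[OF cB cC H K psi u' v' p(2)] dn ..
  qed
qed

end
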